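(* (i) If $X',X''\in\lambda\mathrm{Der}(\mathcal{B})[[\lambda]]$ both satisfy $\exp(X')\phi_0'(\mathcal{A}'[[\lambda]])\subseteq C$ and $\exp(X'')\phi_0'(\mathcal{A}'[[\lambda]])\subseteq C$, then there is $\xi\in\lambda\mathrm{Der}(\mathcal{A}')[[\lambda]]$ with $\exp(X')\phi_0'=(\exp(X'')\phi_0')\circ\exp(\xi)$. (ii) If $\pi'$ (resp. $\pi''$) is the unique Poisson structure on $\mathcal{A}'[[\lambda]]$ making $\exp(X')\phi_0'$ (resp. $\exp(X'')\phi_0'$) a Poisson morphism into $(\mathcal{B}[[\lambda]],\sigma)$, then $\pi'$ and $\pi''$ are equivalent, i.e. $\pi''=\exp(\eta)\pi'$ for some $\eta\in\lambda\mathrm{Der}(\mathcal{A}')[[\lambda]]$ (so the equivalence class of $\pi'$ does not depend on the choice of $X'$).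
   Context: $\mathbb{K}$ is a field of characteristic zero. $\mathcal{A},\mathcal{B}$ are commutative $\mathbb{K}$-algebras with Poisson brackets $\pi_0=\{\cdot,\cdot\}_{\mathcal{A}}$, $\sigma_0=\{\cdot,\cdot\}_{\mathcal{B}}$, and $\phi_0:\mathcal{A}\to\mathcal{B}$ is a Poisson morphism. $\pi,\sigma$ are formal Poisson deformations of $\pi_0,\sigma_0$ ($\mathbb{K}[[\lambda]]$-bilinear Poisson brackets on $\mathcal{A}[[\lambda]]$, $\mathcal{B}[[\lambda]]$ with zeroth-order terms $\pi_0,\sigma_0$), and $\Phi:(\mathcal{A}[[\lambda]],\pi)\to(\mathcal{B}[[\lambda]],\sigma)$ is a $\mathbb{K}[[\lambda]]$-linear Poisson morphism with zeroth-order term $\phi_0$. $\mathcal{A}'$ is the Poisson commutant of $\phi_0(\mathcal{A})$ in $(\mathcal{B},\sigma_0)$, with induced bracket, and $\phi_0'$ is the inclusion $\mathcal{A}'\to\mathcal{B}$ extended $\lambda$-linearly. $C$ is the commutant of $\Phi(\mathcal{A}[[\lambda]])$ in $(\mathcal{B}[[\lambda]],\sigma)$. For such $X'$, the map $\exp(X')\phi_0':\mathcal{A}'[[\lambda]]\to C$ is a ring isomorphism and there is a unique Poisson structure on $\mathcal{A}'[[\lambda]]$ making it a Poisson morphism into $(\mathcal{B}[[\lambda]],\sigma)$. Exponentials of derivations are $\exp(X)=\sum_nX^n/n!$. *)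

theory Defs
  imports Main "HOL-Computational_Algebra.Formal_Power_Series"
begin

definition kalgebra :: "('k::field \<Rightarrow> 'a::comm_ring_1 \<Rightarrow> 'a) \<Rightarrow> bool" where
  "kalgebra sc \<longleftrightarrow> vector_space sc \<and> (\<forall>c x y. sc c (x * y) = sc c x * y)"

definition klinear_on :: "('k \<Rightarrow> 'a \<Rightarrow> 'a) \<Rightarrow> ('k \<Rightarrow> 'b \<Rightarrow> 'b) \<Rightarrow> 'a::plus set \<Rightarrow> ('a \<Rightarrow> 'b::plus) \<Rightarrow> bool" where
  "klinear_on scA scB S F \<longleftrightarrow>
     (\<forall>x\<in>S. \<forall>y\<in>S. F (x + y) = F x + F y) \<and> (\<forall>c. \<forall>x\<in>S. F (scA c x) = scB c (F x))"

definition kbilinear_on :: "('k \<Rightarrow> 'a::plus \<Rightarrow> 'a) \<Rightarrow> 'a set \<Rightarrow> ('a \<Rightarrow> 'a \<Rightarrow> 'a) \<Rightarrow> bool" where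
  "kbilinear_on sc S P \<longleftrightarrow>
     (\<forall>y\<in>S. klinear_on sc sc S (\<lambda>x. P x y)) \<and> (\<forall>x\<in>S. klinear_on sc sc S (P x))"

definition poisson_on :: "('k \<Rightarrow> 'a::comm_ring_1 \<Rightarrow> 'a) \<Rightarrow> 'a set \<Rightarrow> ('a \<Rightarrow> 'a \<Rightarrow> 'a) \<Rightarrow> bool" where
  "poisson_on sc S P \<longleftrightarrow> kbilinear_on sc S P \<and>
     (\<forall>x\<in>S. \<forall>y\<in>S. P x y \<in> S \<and> P x y = - P y x) \<and>
     (\<forall>x\<in>S. \<forall>y\<in>S. \<forall>z\<in>S. P x (P y z) + P y (P z x) + P z (P x y) = 0) \<and>
     (\<forall>x\<in>S. \<forall>y\<in>S. \<forall>z\<in>S. P x (y * z) = P x y * z + y * P x z)"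

definition derivation_on :: "('k \<Rightarrow> 'a::comm_ring_1 \<Rightarrow> 'a) \<Rightarrow> 'a set \<Rightarrow> ('a \<Rightarrow> 'a) \<Rightarrow> bool" where
  "derivation_on sc S D \<longleftrightarrow> klinear_on sc sc S D \<and> (\<forall>x\<in>S. D x \<in> S) \<and>
     (\<forall>x\<in>S. \<forall>y\<in>S. D (x * y) = D x * y + x * D y)"

definition fps_over :: "'a set \<Rightarrow> 'a fps set" where
  "fps_over S = {f. \<forall>n. fps_nth f n \<in> S}"

text \<open>A K[[lambda]]-linear map A[[lambda]] \<rightarrow> B[[lambda]] is represented by its
  sequence of coefficients F = sum lambda^n F_n with F_n : A \<rightarrow> B K-linear.\<close>
definition fapply :: "(nat \<Rightarrow> 'a \<Rightarrow> 'b::comm_monoid_add) \<Rightarrow> 'a fps \<Rightarrow> 'b fps" where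
  "fapply F f = Abs_fps (\<lambda>n. \<Sum>i\<le>n. F i (fps_nth f (n - i)))"

definition fcomp :: "(nat \<Rightarrow> 'b \<Rightarrow> 'c::comm_monoid_add) \<Rightarrow> (nat \<Rightarrow> 'a \<Rightarrow> 'b) \<Rightarrow> nat \<Rightarrow> 'a \<Rightarrow> 'c" where
  "fcomp F G = (\<lambda>n x. \<Sum>i\<le>n. F i (G (n - i) x))"

definition fid :: "nat \<Rightarrow> 'a \<Rightarrow> 'a::zero" where
  "fid = (\<lambda>n x. if n = 0 then x else 0)"

primrec fpow :: "(nat \<Rightarrow> 'a \<Rightarrow> 'a::comm_monoid_add) \<Rightarrow> nat \<Rightarrow> nat \<Rightarrow> 'a \<Rightarrow> 'a" where
  "fpow X 0 = fid"
| "fpow X (Suc k) = fcomp X (fpow X k)"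

definition fneg :: "(nat \<Rightarrow> 'a \<Rightarrow> 'b::uminus) \<Rightarrow> nat \<Rightarrow> 'a \<Rightarrow> 'b" where
  "fneg X = (\<lambda>n x. - X n x)"

text \<open>exp(X) = sum_k X^k / k!  for X with vanishing zeroth-order term (X_0 = 0);
  then X^k has order \<ge> k, so the coefficient of lambda^m only involves k \<le> m.\<close>
definition fexp :: "('k::field_char_0 \<Rightarrow> 'a \<Rightarrow> 'a) \<Rightarrow> (nat \<Rightarrow> 'a \<Rightarrow> 'a::comm_monoid_add) \<Rightarrow> nat \<Rightarrow> 'a \<Rightarrow> 'a" where
  "fexp sc X = (\<lambda>m x. \<Sum>k\<le>m. sc (inverse (fact k)) (fpow X k m x))"

text \<open>K[[lambda]]-bilinear bracket on A[[lambda]] given by the series P = sum lambda^n P_n.\<close>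
definition fbracket :: "(nat \<Rightarrow> 'a \<Rightarrow> 'a \<Rightarrow> 'a::comm_monoid_add) \<Rightarrow> 'a fps \<Rightarrow> 'a fps \<Rightarrow> 'a fps" where
  "fbracket P f g = Abs_fps (\<lambda>n. \<Sum>i\<le>n. \<Sum>j\<le>n - i. P i (fps_nth f j) (fps_nth g (n - i - j)))"

definition formal_poisson_on :: "('k \<Rightarrow> 'a::comm_ring_1 \<Rightarrow> 'a) \<Rightarrow> 'a set \<Rightarrow> (nat \<Rightarrow> 'a \<Rightarrow> 'a \<Rightarrow> 'a) \<Rightarrow> bool" where
  "formal_poisson_on sc S P \<longleftrightarrow>
     (\<forall>n. kbilinear_on sc S (P n) \<and> (\<forall>x\<in>S. \<forall>y\<in>S. P n x y \<in> S)) \<and>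
     (\<forall>f\<in>fps_over S. \<forall>g\<in>fps_over S. fbracket P f g = - fbracket P g f) \<and>
     (\<forall>f\<in>fps_over S. \<forall>g\<in>fps_over S. \<forall>h\<in>fps_over S.
        fbracket P f (fbracket P g h) + fbracket P g (fbracket P h f) + fbracket P h (fbracket P f g) = 0) \<and>
     (\<forall>f\<in>fps_over S. \<forall>g\<in>fps_over S. \<forall>h\<in>fps_over S.
        fbracket P f (g * h) = fbracket P f g * h + g * fbracket P f h)"

definition poisson_commutant :: "('b \<Rightarrow> 'b \<Rightarrow> 'b::zero) \<Rightarrow> ('a \<Rightarrow> 'b) \<Rightarrow> 'b set" where
  "poisson_commutant s0 phi0 = {b. \<forall>a. s0 (phi0 a) b = 0}"

end

theory Submission
  imports Defs
begin

unbundle fps_syntax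

definition addlin :: "(nat \<Rightarrow> 'b::ab_group_add \<Rightarrow> 'b) \<Rightarrow> bool" where
  "addlin X \<longleftrightarrow> (\<forall>n x y. X n (x + y) = X n x + X n y)"

lemma addlin_add: "addlin X \<Longrightarrow> X n (x + y) = X n x + X n y"
  unfolding addlin_def by blast

lemma addlin_zero: "addlin X \<Longrightarrow> X n 0 = 0"
proof -
  assume "addlin X"
  then have "X n (0 + 0) = X n 0 + X n 0" by (rule addlin_add)
  then show ?thesis by simp
qed

lemma addlin_neg: "addlin X \<Longrightarrow> X n (- x) = - X n x"
proof -
  assume a: "addlin X"
  then have "X n (x + - x) = X n x + X n (- x)" by (rule addlin_add)
  then show ?thesis using addlin_zero[OF a] by (simp add: eq_neg_iff_add_eq_0 add.commute)
qed
lemma addlin_diff: "addlin X \<Longrightarrow> X n (x - y) = X n x - X n y"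
proof -
  assume a: "addlin X"
  have "X n (x - y) = X n (x + - y)" by simp
  also have "\<dots> = X n x + X n (- y)" by (rule addlin_add[OF a])
  also have "\<dots> = X n x - X n y" using addlin_neg[OF a, of n y] by simp
  finally show ?thesis .
qed

lemma addlin_sum: "addlin X \<Longrightarrow> X n (\<Sum>i\<in>A. f i) = (\<Sum>i\<in>A. X n (f i))"
proof (induction A rule: infinite_finite_induct)
  case (infinite A) then show ?case using addlin_zero by simp
next
  case empty then show ?case using addlin_zero by simp
next
  case (insert x F) then show ?case using addlin_add[of X n] by simp
qed

lemma addlin_of_nat: "addlin X \<Longrightarrow> X n (of_nat k * x) = of_nat k * X n x"
  for X :: "nat \<Rightarrow> 'b::ring_1 \<Rightarrow> 'b"
proof (induction k)
  case 0 then show ?case using addlin_zero by simp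
next
  case (Suc k)
  have "X n (of_nat (Suc k) * x) = X n (x + of_nat k * x)" by (simp add: algebra_simps)
  also have "\<dots> = X n x + X n (of_nat k * x)" by (rule addlin_add[OF Suc.prems])
  also have "\<dots> = of_nat (Suc k) * X n x" using Suc by (simp add: algebra_simps)
  finally show ?case .
qed

lemma fapply_nth: "fapply F f $ n = (\<Sum>i\<le>n. F i (f $ (n - i)))"
  by (simp add: fapply_def)

lemma fapply_add: "addlin F \<Longrightarrow> fapply F (f + g) = fapply F f + fapply F g"
  by (simp add: fps_eq_iff fapply_nth addlin_add sum.distrib)

lemma fapply_zero: "addlin F \<Longrightarrow> fapply F 0 = 0"
  by (simp add: fps_eq_iff fapply_nth addlin_zero)

lemma fapply_neg: "addlin F \<Longrightarrow> fapply F (- f) = - fapply F f"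
  by (simp add: fps_eq_iff fapply_nth addlin_neg sum_negf)

lemma fapply_diff: "addlin F \<Longrightarrow> fapply F (f - g) = fapply F f - fapply F g"
  by (simp add: fps_eq_iff fapply_nth addlin_diff sum_subtractf)

lemma fapply_sum: "addlin F \<Longrightarrow> fapply F (\<Sum>i\<in>A. f i) = (\<Sum>i\<in>A. fapply F (f i))"
  by (induction A rule: infinite_finite_induct) (auto simp: fapply_zero fapply_add)

lemma fapply_const: "addlin F \<Longrightarrow> fapply F (fps_const a) $ n = F n a"
proof -
  assume a: "addlin F"
  have "fapply F (fps_const a) $ n = (\<Sum>i\<le>n. if i = n then F n a else 0)"
    unfolding fapply_nth by (rule sum.cong) (auto simp: addlin_zero[OF a])
  then show ?thesis by simp
qed

lemma fapply_dep: "(\<And>j. j \<le> m \<Longrightarrow> f $ j = g $ j) \<Longrightarrow> fapply F f $ m = fapply F g $ m"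
  unfolding fapply_nth by (rule sum.cong) auto

lemma fapply_fid: "fapply fid f = f"
proof -
  have "fapply fid f $ n = f $ n" for n
  proof -
    have "fapply fid f $ n = (\<Sum>i\<le>n. if i = 0 then f $ n else 0)"
      unfolding fapply_nth fid_def by (rule sum.cong) auto
    then show ?thesis by simp
  qed
  then show ?thesis by (simp add: fps_eq_iff)
qed

lemma fapply_fneg: "fapply (fneg X) f = - fapply X f" for X :: "nat \<Rightarrow> 'a \<Rightarrow> 'b::ab_group_add"
  by (simp add: fps_eq_iff fapply_nth fneg_def sum_negf)

lemma tri_sum: "(\<Sum>i\<le>m. \<Sum>j\<le>i. h j (i - j)) = (\<Sum>u\<le>m. \<Sum>v\<le>m - u. h u v)"
  for h :: "nat \<Rightarrow> nat \<Rightarrow> 'b::comm_monoid_add"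
proof -
  have "(\<Sum>i\<le>m. \<Sum>j\<le>i. h j (i - j)) = (\<Sum>(u,v)\<in>{(u,v). u + v \<le> m}. h u v)"
    by (rule sum.triangle_reindex_eq[symmetric])
  also have "{(u,v). u + v \<le> m} = Sigma {..m} (\<lambda>u. {..m-u})" by (auto simp: le_diff_conv2)
  also have "(\<Sum>(u,v)\<in>Sigma {..m} (\<lambda>u. {..m-u}). h u v) = (\<Sum>u\<le>m. \<Sum>v\<le>m - u. h u v)"
    by (rule sum.Sigma[symmetric]) simp_all
  finally show ?thesis .
qed

lemma fapply_fcomp: "addlin F \<Longrightarrow> fapply (fcomp F G) f = fapply F (fapply G f)"
proof -
  assume a: "addlin F"
  have "fapply (fcomp F G) f $ m = fapply F (fapply G f) $ m" for m
  proof -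
    have "fapply (fcomp F G) f $ m = (\<Sum>i\<le>m. \<Sum>j\<le>i. F j (G (i - j) (f $ (m - i))))"
      by (simp add: fapply_nth fcomp_def)
    also have "\<dots> = (\<Sum>i\<le>m. \<Sum>j\<le>i. (\<lambda>u v. F u (G v (f $ (m - u - v)))) j (i - j))"
      by (intro sum.cong refl) (auto simp: diff_diff_add)
    also have "\<dots> = (\<Sum>u\<le>m. \<Sum>v\<le>m - u. F u (G v (f $ (m - u - v))))"
      by (rule tri_sum)
    also have "\<dots> = fapply F (fapply G f) $ m"
      by (simp add: fapply_nth addlin_sum[OF a] diff_diff_add)
    finally show ?thesis .
  qed
  then show ?thesis by (simp add: fps_eq_iff)
qed

lemma addlin_fcomp: "addlin F \<Longrightarrow> addlin G \<Longrightarrow> addlin (fcomp F G)"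
  unfolding addlin_def fcomp_def by (simp add: sum.distrib)

lemma addlin_fid: "addlin fid"
  unfolding addlin_def fid_def by simp

lemma addlin_fpow: "addlin X \<Longrightarrow> addlin (fpow X k)"
  by (induction k) (auto simp: addlin_fid addlin_fcomp)

lemma addlin_fneg: "addlin X \<Longrightarrow> addlin (fneg X)"
  unfolding addlin_def fneg_def by simp

lemma fpow_fapply: "addlin X \<Longrightarrow> fapply (fpow X k) f = (fapply X ^^ k) f"
proof (induction k)
  case 0 then show ?case by (simp add: fapply_fid)
next
  case (Suc k)
  have "fapply (fpow X (Suc k)) f = fapply X (fapply (fpow X k) f)"
    using fapply_fcomp[OF Suc.prems] by simp
  then show ?case using Suc by simp
qed

lemma fpow_order:
  assumes "addlin X" "X 0 = (\<lambda>x. 0)"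
  shows "i < k \<Longrightarrow> fpow X k i x = 0"
proof (induction k arbitrary: i x)
  case 0 then show ?case by simp
next
  case (Suc k)
  have "fpow X (Suc k) i x = (\<Sum>j\<le>i. X j (fpow X k (i - j) x))" by (simp add: fcomp_def)
  also have "\<dots> = (\<Sum>j\<le>i. 0)"
  proof (rule sum.cong[OF refl])
    fix j assume "j \<in> {..i}"
    show "X j (fpow X k (i - j) x) = 0"
    proof (cases "j = 0")
      case True then show ?thesis using assms(2) by simp
    next
      case False
      then have "i - j < k" using Suc.prems \<open>j \<in> {..i}\<close> by auto
      then show ?thesis using Suc.IH addlin_zero[OF assms(1)] by simp
    qed
  qed
  finally show ?case by simp
qed

lemma xpow_order:
  assumes "addlin X" "X 0 = (\<lambda>x. 0)" "r < k"
  shows "(fapply X ^^ k) f $ r = 0"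
proof -
  have "(fapply X ^^ k) f $ r = fapply (fpow X k) f $ r" by (simp only: fpow_fapply[OF assms(1)])
  also have "\<dots> = (\<Sum>i\<le>r. fpow X k i (f $ (r - i)))" by (rule fapply_nth)
  also have "\<dots> = (\<Sum>i\<le>r. 0)"
    by (rule sum.cong[OF refl]) (use assms in \<open>auto intro: fpow_order\<close>)
  finally show ?thesis by simp
qed

lemma xpow_dep: "addlin X \<Longrightarrow> (\<And>j. j \<le> m \<Longrightarrow> f $ j = g $ j) \<Longrightarrow> (fapply X ^^ k) f $ m = (fapply X ^^ k) g $ m"
  by (simp only: fpow_fapply[symmetric]) (rule fapply_dep)

lemma xpow_add: "addlin X \<Longrightarrow> (fapply X ^^ k) (f + g) = (fapply X ^^ k) f + (fapply X ^^ k) g"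
  by (simp only: fpow_fapply[symmetric]) (rule fapply_add[OF addlin_fpow])

lemma xpow_sum: "addlin X \<Longrightarrow> (fapply X ^^ k) (\<Sum>i\<in>A. f i) = (\<Sum>i\<in>A. (fapply X ^^ k) (f i))"
  by (simp only: fpow_fapply[symmetric]) (rule fapply_sum[OF addlin_fpow])

lemma fapply_neg1pow: "addlin X \<Longrightarrow> fapply X ((-1)^k * g) = (-1)^k * fapply X g"
  for X :: "nat \<Rightarrow> 'b::comm_ring_1 \<Rightarrow> 'b"
  by (cases "even k") (simp_all add: fapply_neg)

lemma xpow_neg: "addlin X \<Longrightarrow> (fapply (fneg X) ^^ k) f = (-1)^k * (fapply X ^^ k) f"
  for X :: "nat \<Rightarrow> 'b::comm_ring_1 \<Rightarrow> 'b"
proof (induction k)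
  case 0 then show ?case by simp
next
  case (Suc k)
  have "(fapply (fneg X) ^^ Suc k) f = - fapply X ((fapply (fneg X) ^^ k) f)"
    by (simp add: fapply_fneg)
  also have "\<dots> = - fapply X ((-1)^k * (fapply X ^^ k) f)" using Suc by simp
  also have "\<dots> = (-1)^(Suc k) * (fapply X ^^ Suc k) f"
    using fapply_neg1pow[OF Suc.prems] by simp
  finally show ?case .
qed


definition sclin :: "('k \<Rightarrow> 'b \<Rightarrow> 'b) \<Rightarrow> (nat \<Rightarrow> 'b::ab_group_add \<Rightarrow> 'b) \<Rightarrow> bool" where
  "sclin sc X \<longleftrightarrow> addlin X \<and> (\<forall>n c x. X n (sc c x) = sc c (X n x))"

locale kalg =
  fixes sc :: "'k::field_char_0 \<Rightarrow> 'b::comm_ring_1 \<Rightarrow> 'b"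
  assumes alg: "kalgebra sc"
begin

lemma vs: "vector_space sc" using alg by (simp add: kalgebra_def)

sublocale vs: vector_space sc by (rule vs)

lemma sc_mult: "sc c (x * y) = sc c x * y" using alg by (simp add: kalgebra_def)

lemma sc_1: "sc c x = sc c 1 * x"
  using sc_mult[of c 1 x] by simp

lemma sc_of_nat: "sc (of_nat n) y = of_nat n * y"
  by (induction n) (simp_all add: vs.scale_left_distrib algebra_simps)

definition gam :: "nat \<Rightarrow> 'b" where "gam k = sc (inverse (fact k)) 1"

lemma gam0: "gam 0 = 1" by (simp add: gam_def)

lemma sc_1_mult: "sc a 1 * sc b 1 = sc (a * b) 1"
  by (metis sc_1 vs.scale_scale)

lemma gam_mult: "gam j * gam l = gam (j + l) * of_nat ((j + l) choose j)"
proof -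
  have "gam j * gam l = sc (inverse (fact j) * inverse (fact l)) 1"
    by (simp add: gam_def sc_1_mult)
  also have "inverse (fact j) * inverse (fact l) = (of_nat ((j + l) choose j) * inverse (fact (j + l)) :: 'k)"
    by (simp add: binomial_fact field_simps)
  also have "sc (of_nat ((j + l) choose j) * inverse (fact (j + l))) 1 = of_nat ((j + l) choose j) * gam (j + l)"
    by (simp add: gam_def sc_of_nat flip: vs.scale_scale)
  finally show ?thesis by (simp add: mult.commute)
qed

lemma sclin_addlin: "sclin sc X \<Longrightarrow> addlin X" by (simp add: sclin_def)

lemma sclin_sc: "sclin sc X \<Longrightarrow> X n (sc c x) = sc c (X n x)" by (simp add: sclin_def)

lemma sclin_scmult: "sclin sc X \<Longrightarrow> X n (sc c 1 * x) = sc c 1 * X n x"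
  using sclin_sc[of X n c x] by (simp flip: sc_1)

lemma sclin_gam: "sclin sc X \<Longrightarrow> X n (gam k * x) = gam k * X n x"
  unfolding gam_def by (rule sclin_scmult)

lemma sclin_fcomp: "sclin sc F \<Longrightarrow> sclin sc G \<Longrightarrow> sclin sc (fcomp F G)"
  unfolding sclin_def by (simp add: addlin_fcomp) (simp add: fcomp_def vs.scale_sum_right)

lemma sclin_fid: "sclin sc fid"
  unfolding sclin_def by (simp add: addlin_fid) (simp add: fid_def)

lemma sclin_fpow: "sclin sc X \<Longrightarrow> sclin sc (fpow X k)"
  by (induction k) (simp_all add: sclin_fid sclin_fcomp)

lemma sclin_fneg: "sclin sc X \<Longrightarrow> sclin sc (fneg X)"
  unfolding sclin_def by (simp add: addlin_fneg) (simp add: fneg_def)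

lemma fexp_gam: "fexp sc X m x = (\<Sum>k\<le>m. gam k * fpow X k m x)"
  unfolding fexp_def gam_def by (simp flip: sc_1)

lemma sclin_fexp: "sclin sc X \<Longrightarrow> sclin sc (fexp sc X)"
proof -
  assume a: "sclin sc X"
  have p: "sclin sc (fpow X k)" for k by (rule sclin_fpow[OF a])
  show ?thesis unfolding sclin_def addlin_def
  proof (intro conjI allI)
    fix n x y
    show "fexp sc X n (x + y) = fexp sc X n x + fexp sc X n y"
      unfolding fexp_gam using addlin_add[OF sclin_addlin[OF p]]
      by (simp add: distrib_left sum.distrib)
  next
    fix n c x
    show "fexp sc X n (sc c x) = sc c (fexp sc X n x)"
    proof -
      have "fexp sc X n (sc c x) = (\<Sum>k\<le>n. gam k * fpow X k n (sc c 1 * x))"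
        unfolding fexp_gam by (simp flip: sc_1)
      also have "\<dots> = (\<Sum>k\<le>n. sc c 1 * (gam k * fpow X k n x))"
        using sclin_scmult[OF p] by (simp add: mult.left_commute)
      also have "\<dots> = sc c 1 * fexp sc X n x"
        unfolding fexp_gam by (simp add: sum_distrib_left)
      finally show ?thesis by (simp flip: sc_1)
    qed
  qed
qed

lemma fexp_idx0: "fexp sc X 0 x = x"
  by (simp add: fexp_gam gam0 fid_def)

lemma sum_extend:
  fixes g :: "nat \<Rightarrow> 'c::comm_monoid_add"
  assumes "i \<le> m" "\<And>k. i < k \<Longrightarrow> k \<le> m \<Longrightarrow> g k = 0"
  shows "(\<Sum>k\<le>i. g k) = (\<Sum>k\<le>m. g k)"
  by (rule sum.mono_neutral_left) (use assms in auto)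

lemma fexp_expand:
  assumes a: "sclin sc X" and z: "X 0 = (\<lambda>x. 0)"
  shows "fapply (fexp sc X) f $ m = (\<Sum>k\<le>m. gam k * ((fapply X ^^ k) f $ m))"
proof -
  have ad: "addlin X" using a by (rule sclin_addlin)
  have "fapply (fexp sc X) f $ m = (\<Sum>i\<le>m. \<Sum>k\<le>i. gam k * fpow X k i (f $ (m - i)))"
    by (simp add: fapply_nth fexp_gam)
  also have "\<dots> = (\<Sum>i\<le>m. \<Sum>k\<le>m. gam k * fpow X k i (f $ (m - i)))"
  proof (rule sum.cong[OF refl])
    fix i assume "i \<in> {..m}"
    then show "(\<Sum>k\<le>i. gam k * fpow X k i (f $ (m - i))) = (\<Sum>k\<le>m. gam k * fpow X k i (f $ (m - i)))"
      by (intro sum_extend) (auto simp: fpow_order[OF ad z])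
  qed
  also have "\<dots> = (\<Sum>k\<le>m. \<Sum>i\<le>m. gam k * fpow X k i (f $ (m - i)))"
    by (rule sum.swap)
  also have "\<dots> = (\<Sum>k\<le>m. gam k * (fapply (fpow X k) f $ m))"
    by (simp add: fapply_nth sum_distrib_left)
  also have "\<dots> = (\<Sum>k\<le>m. gam k * ((fapply X ^^ k) f $ m))"
    by (simp only: fpow_fapply[OF ad])
  finally show ?thesis .
qed

lemma xop_gam: "sclin sc X \<Longrightarrow> fapply X (fps_const (gam k) * f) = fps_const (gam k) * fapply X f"
  by (simp add: fps_eq_iff fapply_nth sclin_gam sum_distrib_left)

lemma xpow_gam: "sclin sc X \<Longrightarrow> (fapply X ^^ j) (fps_const (gam k) * f) = fps_const (gam k) * (fapply X ^^ j) f"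
  by (induction j) (simp_all add: xop_gam)

end




definition subalg :: "('k \<Rightarrow> 'b \<Rightarrow> 'b) \<Rightarrow> 'b::comm_ring_1 set \<Rightarrow> bool" where
  "subalg sc S \<longleftrightarrow> 0 \<in> S \<and> (\<forall>x\<in>S. \<forall>y\<in>S. x + y \<in> S \<and> x * y \<in> S) \<and> (\<forall>x\<in>S. - x \<in> S) \<and>
     (\<forall>c. \<forall>x\<in>S. sc c x \<in> S)"

definition der :: "'b::comm_ring_1 set \<Rightarrow> (nat \<Rightarrow> 'b \<Rightarrow> 'b) \<Rightarrow> bool" where
  "der S X \<longleftrightarrow> (\<forall>n. (\<forall>x\<in>S. X n x \<in> S) \<and> (\<forall>x\<in>S. \<forall>y\<in>S. X n (x * y) = X n x * y + x * X n y))"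

lemma subalg_0: "subalg sc S \<Longrightarrow> 0 \<in> S" by (simp add: subalg_def)
lemma subalg_add: "subalg sc S \<Longrightarrow> x \<in> S \<Longrightarrow> y \<in> S \<Longrightarrow> x + y \<in> S" by (simp add: subalg_def)
lemma subalg_mult: "subalg sc S \<Longrightarrow> x \<in> S \<Longrightarrow> y \<in> S \<Longrightarrow> x * y \<in> S" by (simp add: subalg_def)
lemma subalg_neg: "subalg sc S \<Longrightarrow> x \<in> S \<Longrightarrow> - x \<in> S" by (simp add: subalg_def)
lemma subalg_sc: "subalg sc S \<Longrightarrow> x \<in> S \<Longrightarrow> sc c x \<in> S" by (simp add: subalg_def)
lemma subalg_diff: "subalg sc S \<Longrightarrow> x \<in> S \<Longrightarrow> y \<in> S \<Longrightarrow> x - y \<in> S"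
  using subalg_add[of sc S x "- y"] subalg_neg[of sc S y] by simp

lemma subalg_sum: "subalg sc S \<Longrightarrow> (\<And>i. i \<in> A \<Longrightarrow> f i \<in> S) \<Longrightarrow> (\<Sum>i\<in>A. f i) \<in> S"
proof (induction A rule: infinite_finite_induct)
  case (infinite A) then show ?case using subalg_0 by simp
next
  case empty then show ?case using subalg_0 by simp
next
  case (insert x F) then show ?case using subalg_add[of sc S] by simp
qed

lemma subalg_UNIV: "subalg sc UNIV" by (simp add: subalg_def)

lemma der_in: "der S X \<Longrightarrow> x \<in> S \<Longrightarrow> X n x \<in> S" by (simp add: der_def)
lemma der_leib: "der S X \<Longrightarrow> x \<in> S \<Longrightarrow> y \<in> S \<Longrightarrow> X n (x * y) = X n x * y + x * X n y"
  by (simp add: der_def)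

lemma fps_overI: "(\<And>n. f $ n \<in> S) \<Longrightarrow> f \<in> fps_over S" by (simp add: fps_over_def)
lemma fps_overD: "f \<in> fps_over S \<Longrightarrow> f $ n \<in> S" by (simp add: fps_over_def)

lemma fps_over_mult:
  assumes S: "subalg sc S" and f: "f \<in> fps_over S" and g: "g \<in> fps_over S"
  shows "f * g \<in> fps_over S"
proof (rule fps_overI)
  fix n
  show "(f * g) $ n \<in> S" unfolding fps_mult_nth
    by (rule subalg_sum[OF S], rule subalg_mult[OF S]) (rule fps_overD[OF f], rule fps_overD[OF g])
qed

lemma fps_over_add:
  assumes S: "subalg sc S" and f: "f \<in> fps_over S" and g: "g \<in> fps_over S"
  shows "f + g \<in> fps_over S"
  using subalg_add[OF S fps_overD[OF f] fps_overD[OF g]] by (simp add: fps_overI)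

lemma fps_over_diff:
  assumes S: "subalg sc S" and f: "f \<in> fps_over S" and g: "g \<in> fps_over S"
  shows "f - g \<in> fps_over S"
  using subalg_diff[OF S fps_overD[OF f] fps_overD[OF g]] by (simp add: fps_overI)

lemma fps_over_const: "subalg sc S \<Longrightarrow> a \<in> S \<Longrightarrow> fps_const a \<in> fps_over S"
  by (intro fps_overI) (simp add: subalg_0)

lemma xop_over:
  assumes S: "subalg sc S" and d: "der S X" and f: "f \<in> fps_over S"
  shows "fapply X f \<in> fps_over S"
proof (rule fps_overI)
  fix n
  show "fapply X f $ n \<in> S" unfolding fapply_nth
    by (rule subalg_sum[OF S], rule der_in[OF d]) (rule fps_overD[OF f])
qed

lemma xpow_over:
  assumes S: "subalg sc S" and d: "der S X" and f: "f \<in> fps_over S"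
  shows "(fapply X ^^ k) f \<in> fps_over S"
proof (induction k)
  case 0 then show ?case using f by simp
next
  case (Suc k) then show ?case using xop_over[OF S d] by simp
qed

lemma tri_full:
  fixes h :: "nat \<Rightarrow> nat \<Rightarrow> 'c::comm_monoid_add"
  shows "(\<Sum>u\<le>m. \<Sum>v\<le>m - u. h u v) = (\<Sum>u\<le>m. \<Sum>v\<le>m. if u + v \<le> m then h u v else 0)"
proof (rule sum.cong[OF refl])
  fix u assume "u \<in> {..m}"
  have "(\<Sum>v\<le>m. if u + v \<le> m then h u v else 0) = (\<Sum>v\<in>{v\<in>{..m}. u + v \<le> m}. h u v)"
    by (rule sum.inter_filter[symmetric]) simp
  also have "{v\<in>{..m}. u + v \<le> m} = {..m - u}" using \<open>u \<in> {..m}\<close> by auto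
  finally show "(\<Sum>v\<le>m - u. h u v) = (\<Sum>v\<le>m. if u + v \<le> m then h u v else 0)" by simp
qed

lemma tri_swap:
  fixes h :: "nat \<Rightarrow> nat \<Rightarrow> 'c::comm_monoid_add"
  shows "(\<Sum>u\<le>m. \<Sum>v\<le>m - u. h u v) = (\<Sum>v\<le>m. \<Sum>u\<le>m - v. h u v)"
proof -
  have "(\<Sum>u\<le>m. \<Sum>v\<le>m - u. h u v) = (\<Sum>u\<le>m. \<Sum>v\<le>m. if u + v \<le> m then h u v else 0)"
    by (rule tri_full)
  also have "\<dots> = (\<Sum>v\<le>m. \<Sum>u\<le>m. if u + v \<le> m then h u v else 0)"
    by (rule sum.swap)
  also have "\<dots> = (\<Sum>v\<le>m. \<Sum>u\<le>m. if v + u \<le> m then (\<lambda>a b. h b a) v u else 0)"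
    by (simp add: add.commute)
  also have "\<dots> = (\<Sum>v\<le>m. \<Sum>u\<le>m - v. h u v)"
    by (rule tri_full[symmetric])
  finally show ?thesis .
qed





lemma xop_leibniz:
  assumes S: "subalg sc S" and d: "der S X" and a: "addlin X"
    and f: "f \<in> fps_over S" and g: "g \<in> fps_over S"
  shows "fapply X (f * g) = fapply X f * g + f * fapply X g"
proof (rule fps_ext)
  fix m
  have fS: "f $ p \<in> S" and gS: "g $ p \<in> S" for p using f g by (auto intro: fps_overD)
  have "fapply X (f * g) $ m = (\<Sum>i\<le>m. X i (\<Sum>p\<le>m - i. f $ p * g $ (m - i - p)))"
    by (simp only: fapply_nth fps_mult_nth atLeast0AtMost)
  also have "\<dots> = (\<Sum>i\<le>m. \<Sum>p\<le>m - i. X i (f $ p) * g $ (m - i - p) + f $ p * X i (g $ (m - i - p)))"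
    by (simp only: addlin_sum[OF a] der_leib[OF d fS gS])
  also have "\<dots> = (\<Sum>i\<le>m. \<Sum>p\<le>m - i. X i (f $ p) * g $ (m - i - p)) + (\<Sum>i\<le>m. \<Sum>p\<le>m - i. f $ p * X i (g $ (m - i - p)))"
    by (simp only: sum.distrib)
  also have "(\<Sum>i\<le>m. \<Sum>p\<le>m - i. X i (f $ p) * g $ (m - i - p)) = (fapply X f * g) $ m"
  proof -
    have "(fapply X f * g) $ m = (\<Sum>r\<le>m. \<Sum>i\<le>r. X i (f $ (r - i)) * g $ (m - r))"
      by (simp only: fps_mult_nth atLeast0AtMost fapply_nth sum_distrib_right)
    also have "\<dots> = (\<Sum>r\<le>m. \<Sum>i\<le>r. (\<lambda>i p. X i (f $ p) * g $ (m - i - p)) i (r - i))"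
      by (intro sum.cong refl) (auto simp: diff_diff_add)
    also have "\<dots> = (\<Sum>i\<le>m. \<Sum>p\<le>m - i. X i (f $ p) * g $ (m - i - p))"
      by (rule tri_sum)
    finally show ?thesis by simp
  qed
  also have "(\<Sum>i\<le>m. \<Sum>p\<le>m - i. f $ p * X i (g $ (m - i - p))) = (f * fapply X g) $ m"
  proof -
    have "(f * fapply X g) $ m = (\<Sum>r\<le>m. \<Sum>i\<le>m - r. f $ r * X i (g $ (m - r - i)))"
      by (simp only: fps_mult_nth atLeast0AtMost fapply_nth sum_distrib_left)
    also have "\<dots> = (\<Sum>i\<le>m. \<Sum>r\<le>m - i. f $ r * X i (g $ (m - r - i)))"
      by (rule tri_swap)
    also have "\<dots> = (\<Sum>i\<le>m. \<Sum>p\<le>m - i. f $ p * X i (g $ (m - i - p)))"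
      by (intro sum.cong refl) (simp add: diff_diff_add add.commute)
    finally show ?thesis by simp
  qed
  finally show "fapply X (f * g) $ m = (fapply X f * g + f * fapply X g) $ m" by simp
qed


lemma leib_binom:
  fixes L :: "'r::comm_ring_1 \<Rightarrow> 'r"
  assumes add: "addlin (\<lambda>_. L)"
    and clos: "\<And>x. x \<in> M \<Longrightarrow> L x \<in> M"
    and mulc: "\<And>x y. x \<in> M \<Longrightarrow> y \<in> M \<Longrightarrow> x * y \<in> M"
    and leib: "\<And>x y. x \<in> M \<Longrightarrow> y \<in> M \<Longrightarrow> L (x * y) = L x * y + x * L y"
    and u: "u \<in> M" and v: "v \<in> M"
  shows "(L ^^ k) (u * v) = (\<Sum>j\<le>k. of_nat (k choose j) * ((L ^^ j) u * (L ^^ (k - j)) v))"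
proof (induction k)
  case 0 then show ?case by simp
next
  case (Suc k)
  define a where "a j = (L ^^ j) u" for j
  define b where "b j = (L ^^ j) v" for j
  have aM: "a j \<in> M" for j unfolding a_def by (induction j) (simp_all add: u clos)
  have bM: "b j \<in> M" for j unfolding b_def by (induction j) (simp_all add: v clos)
  have La: "L (a j) = a (Suc j)" for j by (simp add: a_def)
  have Lb: "L (b j) = b (Suc j)" for j by (simp add: b_def)
  have Lsum: "L (\<Sum>j\<in>A. h j) = (\<Sum>j\<in>A. L (h j))" for A and h :: "nat \<Rightarrow> 'r"
    using addlin_sum[OF add] by blast
  have Lnat: "L (of_nat n * x) = of_nat n * L x" for n x
    using addlin_of_nat[OF add] by blast
  have "(L ^^ Suc k) (u * v) = L (\<Sum>j\<le>k. of_nat (k choose j) * (a j * b (k - j)))"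
    using Suc by (simp add: a_def b_def)
  also have "\<dots> = (\<Sum>j\<le>k. of_nat (k choose j) * (a (Suc j) * b (k - j) + a j * b (Suc (k - j))))"
    by (simp only: Lsum Lnat leib[OF aM bM] La Lb)
  also have "\<dots> = (\<Sum>j\<le>k. of_nat (k choose j) * (a (Suc j) * b (k - j))) + (\<Sum>j\<le>k. of_nat (k choose j) * (a j * b (Suc k - j)))"
    by (simp add: distrib_left sum.distrib Suc_diff_le)
  also have "(\<Sum>j\<le>k. of_nat (k choose j) * (a j * b (Suc k - j))) = (\<Sum>j\<le>Suc k. of_nat (k choose j) * (a j * b (Suc k - j)))"
    by (simp add: binomial_eq_0)
  also have "\<dots> = a 0 * b (Suc k) + (\<Sum>j\<le>k. of_nat (k choose Suc j) * (a (Suc j) * b (k - j)))"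
    by (subst sum.atMost_Suc_shift) simp
  also have "(\<Sum>j\<le>k. of_nat (k choose j) * (a (Suc j) * b (k - j))) + (a 0 * b (Suc k) + (\<Sum>j\<le>k. of_nat (k choose Suc j) * (a (Suc j) * b (k - j))))
      = a 0 * b (Suc k) + (\<Sum>j\<le>k. of_nat (Suc k choose Suc j) * (a (Suc j) * b (k - j)))"
    by (simp add: sum.distrib distrib_right)
  also have "\<dots> = (\<Sum>j\<le>Suc k. of_nat (Suc k choose j) * (a j * b (Suc k - j)))"
    by (subst sum.atMost_Suc_shift) simp
  finally show ?case by (simp add: a_def b_def)
qed


lemma fps_of_nat_mult_nth: "(of_nat n * h) $ m = of_nat n * (h $ m)"
  by (simp add: fps_of_nat[symmetric])

lemma fps_mult_nth_atMost: "(f * g) $ m = (\<Sum>r\<le>m. f $ r * g $ (m - r))"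
  by (simp add: fps_mult_nth atLeast0AtMost)

context kalg
begin

lemma xpow_binom:
  assumes a: "sclin sc X" and S: "subalg sc S" and d: "der S X"
    and f: "f \<in> fps_over S" and g: "g \<in> fps_over S"
  shows "(fapply X ^^ k) (f * g) = (\<Sum>j\<le>k. of_nat (k choose j) * ((fapply X ^^ j) f * (fapply X ^^ (k - j)) g))"
proof (rule leib_binom[where M = "fps_over S"])
  have ad: "addlin X" using a by (rule sclin_addlin)
  show "addlin (\<lambda>_. fapply X)" unfolding addlin_def using fapply_add[OF ad] by blast
  show "\<And>x. x \<in> fps_over S \<Longrightarrow> fapply X x \<in> fps_over S" by (rule xop_over[OF S d])
  show "\<And>x y. x \<in> fps_over S \<Longrightarrow> y \<in> fps_over S \<Longrightarrow> x * y \<in> fps_over S" by (rule fps_over_mult[OF S])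
  show "\<And>x y. x \<in> fps_over S \<Longrightarrow> y \<in> fps_over S \<Longrightarrow> fapply X (x * y) = fapply X x * y + x * fapply X y"
    by (rule xop_leibniz[OF S d ad])
qed (use f g in auto)

lemma fexp_expand_full:
  assumes a: "sclin sc X" and z: "X 0 = (\<lambda>x. 0)" and r: "r \<le> m"
  shows "fapply (fexp sc X) f $ r = (\<Sum>k\<le>m. gam k * ((fapply X ^^ k) f $ r))"
proof -
  have ad: "addlin X" using a by (rule sclin_addlin)
  show ?thesis unfolding fexp_expand[OF a z]
    by (rule sum_extend[OF r]) (simp add: xpow_order[OF ad z])
qed

lemma fexp_mult:
  assumes a: "sclin sc X" and z: "X 0 = (\<lambda>x. 0)" and S: "subalg sc S" and d: "der S X"
    and f: "f \<in> fps_over S" and g: "g \<in> fps_over S"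
  shows "fapply (fexp sc X) (f * g) = fapply (fexp sc X) f * fapply (fexp sc X) g"
proof (rule fps_ext)
  fix m
  have ad: "addlin X" using a by (rule sclin_addlin)
  define A where "A j = (fapply X ^^ j) f" for j
  define B where "B j = (fapply X ^^ j) g" for j
  define P where "P j l = (A j * B l) $ m" for j l
  have P0: "P j l = 0" if "m < j + l" for j l
  proof -
    have "P j l = (\<Sum>r\<le>m. A j $ r * B l $ (m - r))" by (simp add: P_def fps_mult_nth_atMost)
    also have "\<dots> = (\<Sum>r\<le>m. 0)"
    proof (rule sum.cong[OF refl])
      fix r assume "r \<in> {..m}"
      show "A j $ r * B l $ (m - r) = 0"
      proof (cases "r < j")
        case True then show ?thesis by (simp add: A_def xpow_order[OF ad z])
      next
        case False then have "m - r < l" using that \<open>r \<in> {..m}\<close> by auto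
        then show ?thesis by (simp add: B_def xpow_order[OF ad z])
      qed
    qed
    finally show ?thesis by simp
  qed
  have "fapply (fexp sc X) (f * g) $ m = (\<Sum>k\<le>m. gam k * (\<Sum>j\<le>k. of_nat (k choose j) * P j (k - j)))"
    by (simp only: fexp_expand[OF a z] xpow_binom[OF a S d f g] fps_sum_nth fps_of_nat_mult_nth P_def A_def B_def)
  also have "\<dots> = (\<Sum>k\<le>m. \<Sum>j\<le>k. gam j * gam (k - j) * P j (k - j))"
  proof (rule sum.cong[OF refl])
    fix k assume "k \<in> {..m}"
    have "gam k * (\<Sum>j\<le>k. of_nat (k choose j) * P j (k - j)) = (\<Sum>j\<le>k. gam k * of_nat (k choose j) * P j (k - j))"
      by (simp add: sum_distrib_left mult.assoc)
    also have "\<dots> = (\<Sum>j\<le>k. gam j * gam (k - j) * P j (k - j))"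
    proof (rule sum.cong[OF refl])
      fix j assume "j \<in> {..k}"
      then have "gam j * gam (k - j) = gam k * of_nat (k choose j)" using gam_mult[of j "k - j"] by simp
      then show "gam k * of_nat (k choose j) * P j (k - j) = gam j * gam (k - j) * P j (k - j)" by simp
    qed
    finally show "gam k * (\<Sum>j\<le>k. of_nat (k choose j) * P j (k - j)) = (\<Sum>j\<le>k. gam j * gam (k - j) * P j (k - j))" .
  qed
  also have "\<dots> = (\<Sum>u\<le>m. \<Sum>v\<le>m - u. gam u * gam v * P u v)"
    by (rule tri_sum)
  also have "\<dots> = (\<Sum>u\<le>m. \<Sum>v\<le>m. if u + v \<le> m then gam u * gam v * P u v else 0)"
    by (rule tri_full)
  also have "\<dots> = (\<Sum>u\<le>m. \<Sum>v\<le>m. gam u * gam v * P u v)"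
    by (intro sum.cong refl) (simp add: P0)
  also have "\<dots> = (\<Sum>u\<le>m. \<Sum>v\<le>m. \<Sum>r\<le>m. gam u * gam v * (A u $ r * B v $ (m - r)))"
    by (simp only: P_def fps_mult_nth_atMost sum_distrib_left)
  also have "\<dots> = (\<Sum>u\<le>m. \<Sum>r\<le>m. \<Sum>v\<le>m. gam u * gam v * (A u $ r * B v $ (m - r)))"
    by (rule sum.cong[OF refl], rule sum.swap)
  also have "\<dots> = (\<Sum>r\<le>m. \<Sum>u\<le>m. \<Sum>v\<le>m. gam u * gam v * (A u $ r * B v $ (m - r)))"
    by (rule sum.swap)
  also have "\<dots> = (\<Sum>r\<le>m. (\<Sum>u\<le>m. gam u * A u $ r) * (\<Sum>v\<le>m. gam v * B v $ (m - r)))"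
    by (simp add: sum_product mult_ac)
  also have "\<dots> = (\<Sum>r\<le>m. fapply (fexp sc X) f $ r * fapply (fexp sc X) g $ (m - r))"
  proof (rule sum.cong[OF refl])
    fix r assume "r \<in> {..m}"
    then have r: "r \<le> m" "m - r \<le> m" by auto
    show "(\<Sum>u\<le>m. gam u * A u $ r) * (\<Sum>v\<le>m. gam v * B v $ (m - r)) = fapply (fexp sc X) f $ r * fapply (fexp sc X) g $ (m - r)"
      unfolding fexp_expand_full[OF a z r(1)] fexp_expand_full[OF a z r(2)] A_def B_def ..
  qed
  also have "\<dots> = (fapply (fexp sc X) f * fapply (fexp sc X) g) $ m"
    by (rule fps_mult_nth_atMost[symmetric])
  finally show "fapply (fexp sc X) (f * g) $ m = (fapply (fexp sc X) f * fapply (fexp sc X) g) $ m" .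
qed

end




lemma fps_neg1pow_nth: "((-1)^l * h) $ m = (-1)^l * (h $ m)" for h :: "'b::comm_ring_1 fps"
  by (cases "even l") simp_all

context kalg
begin

lemma gam_in: "subalg sc S \<Longrightarrow> y \<in> S \<Longrightarrow> gam k * y \<in> S"
  unfolding gam_def using sc_1[of "inverse (fact k)" y] subalg_sc[of sc S y] by metis

lemma fexp_over:
  assumes a: "sclin sc X" and z: "X 0 = (\<lambda>x. 0)" and S: "subalg sc S" and d: "der S X"
    and f: "f \<in> fps_over S"
  shows "fapply (fexp sc X) f \<in> fps_over S"
proof (rule fps_overI)
  fix m
  show "fapply (fexp sc X) f $ m \<in> S" unfolding fexp_expand[OF a z]
    by (rule subalg_sum[OF S], rule gam_in[OF S], rule fps_overD, rule xpow_over[OF S d f])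
qed

lemma sclin_fneg_z: "X 0 = (\<lambda>x. 0) \<Longrightarrow> fneg X 0 = (\<lambda>x. 0)" for X :: "nat \<Rightarrow> 'b \<Rightarrow> 'b"
  by (simp add: fneg_def fun_eq_iff)

lemma xpow_neg1pow: "addlin X \<Longrightarrow> (fapply X ^^ j) ((-1)^l * h) = (-1)^l * (fapply X ^^ j) h"
  for X :: "nat \<Rightarrow> 'b \<Rightarrow> 'b"
  by (induction j) (simp_all add: fapply_neg1pow)

lemma alt_binom: "(\<Sum>j\<le>k. of_nat (k choose j) * (-1 :: 'b) ^ (k - j)) = (if k = 0 then 1 else 0)"
  using binomial_ring[of "1 :: 'b" "-1" k] by (simp add: power_0_left)

lemma fexp_inv:
  assumes a: "sclin sc X" and z: "X 0 = (\<lambda>x. 0)"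
  shows "fapply (fexp sc X) (fapply (fexp sc (fneg X)) f) = f"
proof (rule fps_ext)
  fix m
  have ad: "addlin X" using a by (rule sclin_addlin)
  define Y where "Y = fneg X"
  have aY: "sclin sc Y" unfolding Y_def by (rule sclin_fneg[OF a])
  have zY: "Y 0 = (\<lambda>x. 0)" unfolding Y_def using z by (rule sclin_fneg_z)
  have adY: "addlin Y" using aY by (rule sclin_addlin)
  define w where "w = fapply (fexp sc Y) f"
  define wm where "wm = (\<Sum>l\<le>m. fps_const (gam l) * (fapply Y ^^ l) f)"
  have wwm: "w $ r = wm $ r" if "r \<le> m" for r
  proof -
    have "w $ r = (\<Sum>l\<le>m. gam l * ((fapply Y ^^ l) f $ r))"
      unfolding w_def by (rule fexp_expand_full[OF aY zY that])
    also have "\<dots> = wm $ r"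
      unfolding wm_def fps_sum_nth fps_mult_left_const_nth ..
    finally show ?thesis .
  qed
  have xw: "(fapply X ^^ j) w $ m = (\<Sum>l\<le>m. gam l * (-1)^l * ((fapply X ^^ (j + l)) f $ m))" for j
  proof -
    have "(fapply X ^^ j) w $ m = (fapply X ^^ j) wm $ m"
      by (rule xpow_dep[OF ad]) (rule wwm)
    also have "(fapply X ^^ j) wm = (\<Sum>l\<le>m. fps_const (gam l) * ((-1)^l * (fapply X ^^ (j + l)) f))"
      unfolding wm_def xpow_sum[OF ad] xpow_gam[OF a] Y_def xpow_neg[OF ad] xpow_neg1pow[OF ad]
      by (simp add: funpow_add)
    also have "\<dots> $ m = (\<Sum>l\<le>m. gam l * (-1)^l * ((fapply X ^^ (j + l)) f $ m))"
      unfolding fps_sum_nth fps_mult_left_const_nth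
      by (intro sum.cong refl) (simp add: fps_neg1pow_nth mult.assoc)
    finally show ?thesis .
  qed
  define Q where "Q j l = gam j * gam l * (-1)^l * ((fapply X ^^ (j + l)) f $ m)" for j l
  have Q0: "Q j l = 0" if "m < j + l" for j l
    unfolding Q_def using xpow_order[OF ad z that] by simp
  have "fapply (fexp sc X) (fapply (fexp sc (fneg X)) f) $ m = (\<Sum>j\<le>m. gam j * ((fapply X ^^ j) w $ m))"
    unfolding w_def Y_def by (rule fexp_expand[OF a z])
  also have "\<dots> = (\<Sum>j\<le>m. \<Sum>l\<le>m. Q j l)"
    unfolding xw Q_def by (simp only: sum_distrib_left mult.assoc)
  also have "\<dots> = (\<Sum>j\<le>m. \<Sum>l\<le>m. if j + l \<le> m then Q j l else 0)"
    by (intro sum.cong refl) (simp add: Q0)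
  also have "\<dots> = (\<Sum>u\<le>m. \<Sum>v\<le>m - u. Q u v)"
    by (rule tri_full[symmetric])
  also have "\<dots> = (\<Sum>k\<le>m. \<Sum>j\<le>k. Q j (k - j))"
    by (rule tri_sum[symmetric])
  also have "\<dots> = (\<Sum>k\<le>m. if k = 0 then f $ m else 0)"
  proof (rule sum.cong[OF refl])
    fix k assume "k \<in> {..m}"
    have "(\<Sum>j\<le>k. Q j (k - j)) = (\<Sum>j\<le>k. (gam k * ((fapply X ^^ k) f $ m)) * (of_nat (k choose j) * (-1)^(k - j)))"
    proof (rule sum.cong[OF refl])
      fix j assume "j \<in> {..k}"
      then have jk: "j + (k - j) = k" by simp
      have "gam j * gam (k - j) = gam k * of_nat (k choose j)" using gam_mult[of j "k - j"] jk by simp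
      then show "Q j (k - j) = (gam k * ((fapply X ^^ k) f $ m)) * (of_nat (k choose j) * (-1)^(k - j))"
        unfolding Q_def jk by (simp add: mult_ac)
    qed
    also have "\<dots> = (gam k * ((fapply X ^^ k) f $ m)) * (if k = 0 then 1 else 0)"
      by (simp only: sum_distrib_left[symmetric] alt_binom)
    also have "\<dots> = (if k = 0 then f $ m else 0)"
      by (simp add: gam0)
    finally show "(\<Sum>j\<le>k. Q j (k - j)) = (if k = 0 then f $ m else 0)" .
  qed
  also have "\<dots> = f $ m"
    by (simp add: sum.delta)
  finally show "fapply (fexp sc X) (fapply (fexp sc (fneg X)) f) $ m = f $ m" .
qed

end



lemma fcomp_dep:
  assumes "\<And>i. i \<le> m \<Longrightarrow> F i = F' i" "\<And>i. i \<le> m \<Longrightarrow> G i = G' i"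
  shows "fcomp F G m = fcomp F' G' m"
  unfolding fcomp_def using assms by (intro ext sum.cong refl) auto

lemma fpow_dep:
  assumes "\<And>i. i \<le> m \<Longrightarrow> X i = Y i"
  shows "i \<le> m \<Longrightarrow> fpow X k i = fpow Y k i"
proof (induction k arbitrary: i)
  case 0 then show ?case by simp
next
  case (Suc k)
  show ?case unfolding fpow.simps
    by (rule fcomp_dep) (use Suc assms in auto)
qed

lemma fexp_dep:
  assumes "\<And>i. i \<le> m \<Longrightarrow> X i = Y i"
  shows "fexp sc X m = fexp sc Y m"
  unfolding fexp_def using fpow_dep[OF assms] by (intro ext sum.cong refl) auto

lemma fpow1: "addlin X \<Longrightarrow> fpow X (Suc 0) m x = X m x"
proof -
  assume a: "addlin X"
  have "fpow X (Suc 0) m x = (\<Sum>j\<le>m. if j = m then X m x else 0)"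
    unfolding fpow.simps fcomp_def by (rule sum.cong[OF refl]) (auto simp: fid_def addlin_zero[OF a])
  then show ?thesis by simp
qed

lemma fpow_top:
  assumes aX: "addlin X" and aY: "addlin Y" and zX: "X 0 = (\<lambda>x. 0)" and zY: "Y 0 = (\<lambda>x. 0)"
    and eq: "\<And>i. i < m \<Longrightarrow> X i = Y i" and k: "2 \<le> k"
  shows "fpow X k m = fpow Y k m"
proof -
  obtain k' where k': "k = Suc k'" "1 \<le> k'" using k by (cases k) auto
  have "fpow X (Suc k') m x = fpow Y (Suc k') m x" for x
    unfolding fpow.simps fcomp_def
  proof (rule sum.cong[OF refl])
    fix j assume j: "j \<in> {..m}"
    show "X j (fpow X k' (m - j) x) = Y j (fpow Y k' (m - j) x)"
    proof (cases "j = 0")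
      case True then show ?thesis using zX zY by simp
    next
      case False
      show ?thesis
      proof (cases "j = m")
        case True
        then have "fpow X k' (m - j) x = 0" "fpow Y k' (m - j) x = 0"
          using fpow_order[OF aX zX] fpow_order[OF aY zY] k' by auto
        then show ?thesis using addlin_zero[OF aX] addlin_zero[OF aY] by simp
      next
        case False
        then have jm: "j < m" using j by auto
        have "fpow X k' (m - j) = fpow Y k' (m - j)"
          by (rule fpow_dep[where m = "m - 1"]) (use eq \<open>j \<noteq> 0\<close> jm in auto)
        then show ?thesis using eq[OF jm] by simp
      qed
    qed
  qed
  then show ?thesis using k' by auto
qed

context kalg
begin

lemma gam1: "gam (Suc 0) = 1" by (simp add: gam_def)

lemma fexp_top:
  assumes aX: "addlin X" and aY: "addlin Y" and zX: "X 0 = (\<lambda>x. 0)" and zY: "Y 0 = (\<lambda>x. 0)"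
    and eq: "\<And>i. i < m \<Longrightarrow> X i = Y i" and m: "0 < m"
  shows "fexp sc Y m x = fexp sc X m x + (Y m x - X m x)"
proof -
  have "fexp sc Y m x = (\<Sum>k\<le>m. gam k * fpow X k m x + (if k = Suc 0 then Y m x - X m x else 0))"
    unfolding fexp_gam
  proof (rule sum.cong[OF refl])
    fix k assume "k \<in> {..m}"
    show "gam k * fpow Y k m x = gam k * fpow X k m x + (if k = Suc 0 then Y m x - X m x else 0)"
    proof (cases "k = 0")
      case True then show ?thesis by simp
    next
      case False
      show ?thesis
      proof (cases "k = Suc 0")
        case True then show ?thesis using fpow1[OF aX, of m x] fpow1[OF aY, of m x] by (simp del: fpow.simps add: gam1)
      next
        case False
        then have "2 \<le> k" using \<open>k \<noteq> 0\<close> by auto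
        then show ?thesis using fpow_top[OF aX aY zX zY eq] False by simp
      qed
    qed
  qed
  also have "\<dots> = fexp sc X m x + (Y m x - X m x)"
    unfolding sum.distrib fexp_gam using m by (simp add: sum.delta)
  finally show ?thesis .
qed

end



definition Dstep :: "('k::field_char_0 \<Rightarrow> 'b \<Rightarrow> 'b) \<Rightarrow> (nat \<Rightarrow> 'b \<Rightarrow> 'b) \<Rightarrow> (nat \<Rightarrow> 'b \<Rightarrow> 'b) \<Rightarrow> (nat \<Rightarrow> 'b::comm_ring_1 \<Rightarrow> 'b) \<Rightarrow> nat \<Rightarrow> 'b \<Rightarrow> 'b" where
  "Dstep sc X1 X2 T n = (\<lambda>a. fexp sc X1 (Suc n) a - fcomp (fexp sc X2) (fexp sc T) (Suc n) a)"

primrec Tseq :: "('k::field_char_0 \<Rightarrow> 'b \<Rightarrow> 'b) \<Rightarrow> (nat \<Rightarrow> 'b \<Rightarrow> 'b) \<Rightarrow> (nat \<Rightarrow> 'b \<Rightarrow> 'b) \<Rightarrow> nat \<Rightarrow> nat \<Rightarrow> 'b::comm_ring_1 \<Rightarrow> 'b" where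
  "Tseq sc X1 X2 0 = (\<lambda>_ _. 0)"
| "Tseq sc X1 X2 (Suc n) = (Tseq sc X1 X2 n)(Suc n := Dstep sc X1 X2 (Tseq sc X1 X2 n) n)"

lemma Tseq_stable: "k \<le> m \<Longrightarrow> Tseq sc X1 X2 m k = Tseq sc X1 X2 k k"
proof (induction m)
  case 0 then show ?case by simp
next
  case (Suc m)
  show ?case
  proof (cases "k = Suc m")
    case True then show ?thesis by simp
  next
    case False
    then have "k \<le> m" using Suc.prems by simp
    then show ?thesis using Suc.IH False by simp
  qed
qed

context kalg
begin

lemma sclin_upd:
  assumes "sclin sc T" "\<And>x y. D (x + y) = D x + D y" "\<And>c x. D (sc c x) = sc c (D x)"
  shows "sclin sc (T(k := D))"
  using assms unfolding sclin_def addlin_def by auto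

lemma sclin_zero: "sclin sc (\<lambda>_ _. 0)"
  unfolding sclin_def addlin_def by simp

lemma der_zero: "subalg sc S \<Longrightarrow> der S (\<lambda>_ _. 0)"
  unfolding der_def by (simp add: subalg_0)

lemma construct_xi:
  fixes X1 X2 :: "nat \<Rightarrow> 'b \<Rightarrow> 'b" and S :: "'b set" and Cs :: "'b fps set"
  assumes S: "subalg sc S"
    and a1: "sclin sc X1" and z1: "X1 0 = (\<lambda>x. 0)" and d1: "der UNIV X1"
    and a2: "sclin sc X2" and z2: "X2 0 = (\<lambda>x. 0)" and d2: "der UNIV X2"
    and Cdiff: "\<And>g h. g \<in> Cs \<Longrightarrow> h \<in> Cs \<Longrightarrow> g - h \<in> Cs"
    and Cgap: "\<And>h m. h \<in> Cs \<Longrightarrow> (\<And>j. j < m \<Longrightarrow> h $ j = 0) \<Longrightarrow> h $ m \<in> S"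
    and X1C: "\<And>f. f \<in> fps_over S \<Longrightarrow> fapply (fexp sc X1) f \<in> Cs"
    and X2C: "\<And>f. f \<in> fps_over S \<Longrightarrow> fapply (fexp sc X2) f \<in> Cs"
  shows "\<exists>xi. xi 0 = (\<lambda>x. 0) \<and> sclin sc xi \<and> der S xi \<and>
           (\<forall>f\<in>fps_over S. fapply (fexp sc X1) f = fapply (fexp sc X2) (fapply (fexp sc xi) f))"
proof -
  define T where "T = Tseq sc X1 X2"
  define F where "F = fexp sc X1"
  define G where "G = (\<lambda>U. fcomp (fexp sc X2) (fexp sc U))"
  have aF: "sclin sc F" unfolding F_def by (rule sclin_fexp[OF a1])
  have aE2: "sclin sc (fexp sc X2)" by (rule sclin_fexp[OF a2])
  have aG: "sclin sc (G U)" if "sclin sc U" for U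
    unfolding G_def by (rule sclin_fcomp[OF aE2 sclin_fexp[OF that]])
  have TSuc: "T (Suc n) = (T n)(Suc n := (\<lambda>a. F (Suc n) a - G (T n) (Suc n) a))" for n
    by (simp add: T_def F_def G_def Dstep_def)
  have T0: "T 0 = (\<lambda>_ _. 0)" by (simp add: T_def)
  have F0: "F 0 x = x" for x unfolding F_def by (rule fexp_idx0)
  have G0: "G U 0 x = x" for U x by (simp add: G_def fcomp_def fexp_idx0)
  have Gapp: "fapply (G U) f = fapply (fexp sc X2) (fapply (fexp sc U) f)" for U f
    unfolding G_def by (rule fapply_fcomp[OF sclin_addlin[OF aE2]])
  have inv: "T n 0 = (\<lambda>x. 0) \<and> (\<forall>k. n < k \<longrightarrow> T n k = (\<lambda>x. 0)) \<and> sclin sc (T n) \<and> der S (T n) \<and>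
             (\<forall>j\<le>n. \<forall>a\<in>S. F j a = G (T n) j a)" for n
  proof (induction n)
    case 0
    show ?case using T0 sclin_zero der_zero[OF S] F0 G0 by simp
  next
    case (Suc n)
    define U where "U = T n"
    define D where "D = (\<lambda>a. F (Suc n) a - G U (Suc n) a)"
    have U0: "U 0 = (\<lambda>x. 0)" and Uhi: "\<And>k. n < k \<Longrightarrow> U k = (\<lambda>x. 0)" and aU: "sclin sc U"
      and dU: "der S U" and agU: "\<And>j a. j \<le> n \<Longrightarrow> a \<in> S \<Longrightarrow> F j a = G U j a"
      using Suc.IH unfolding U_def by auto
    have U': "T (Suc n) = U(Suc n := D)" unfolding U_def D_def by (rule TSuc)
    have low: "T (Suc n) i = U i" if "i \<le> n" for i using that U' by simp
    have top: "T (Suc n) (Suc n) = D" using U' by simp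
    have aGU: "sclin sc (G U)" by (rule aG[OF aU])
    have Dadd: "D (x + y) = D x + D y" for x y
      unfolding D_def using addlin_add[OF sclin_addlin[OF aF]] addlin_add[OF sclin_addlin[OF aGU]]
      by (simp add: algebra_simps)
    have Dsc: "D (sc c x) = sc c (D x)" for c x
      unfolding D_def using sclin_sc[OF aF] sclin_sc[OF aGU] by (simp add: vs.scale_right_diff_distrib)
    have aU': "sclin sc (T (Suc n))" unfolding U' by (rule sclin_upd[OF aU Dadd Dsc])
    have z': "T (Suc n) 0 = (\<lambda>x. 0)" using low[of 0] U0 by simp
    have hi': "\<forall>k. Suc n < k \<longrightarrow> T (Suc n) k = (\<lambda>x. 0)" using U' Uhi by simp
    have Glow: "G (T (Suc n)) j = G U j" if "j \<le> n" for j
      unfolding G_def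
    proof (rule fcomp_dep)
      fix i assume "i \<le> j"
      show "fexp sc (T (Suc n)) i = fexp sc U i"
        by (rule fexp_dep) (use low \<open>i \<le> j\<close> that in auto)
    qed simp
    have Gtop: "G (T (Suc n)) (Suc n) a = G U (Suc n) a + D a" for a
    proof -
      have "G (T (Suc n)) (Suc n) a = (\<Sum>i\<le>Suc n. fexp sc X2 i (fexp sc U (Suc n - i) a) + (if i = 0 then D a else 0))"
        unfolding G_def fcomp_def
      proof (rule sum.cong[OF refl])
        fix i assume i: "i \<in> {..Suc n}"
        show "fexp sc X2 i (fexp sc (T (Suc n)) (Suc n - i) a) = fexp sc X2 i (fexp sc U (Suc n - i) a) + (if i = 0 then D a else 0)"
        proof (cases "i = 0")
          case True
          have "fexp sc (T (Suc n)) (Suc n) a = fexp sc U (Suc n) a + (T (Suc n) (Suc n) a - U (Suc n) a)"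
            by (rule fexp_top[OF sclin_addlin[OF aU] sclin_addlin[OF aU'] U0 z']) (use low in auto)
          then show ?thesis using True top Uhi[of "Suc n"] by (simp add: fexp_idx0)
        next
          case False
          have "fexp sc (T (Suc n)) (Suc n - i) = fexp sc U (Suc n - i)"
            by (rule fexp_dep) (use low False in auto)
          then show ?thesis using False by simp
        qed
      qed
      also have "\<dots> = G U (Suc n) a + D a"
        unfolding sum.distrib G_def fcomp_def by simp
      finally show ?thesis .
    qed
    have ag': "\<forall>j\<le>Suc n. \<forall>a\<in>S. F j a = G (T (Suc n)) j a"
    proof (intro allI impI ballI)
      fix j a assume j: "j \<le> Suc n" and a: "a \<in> S"
      show "F j a = G (T (Suc n)) j a"
      proof (cases "j = Suc n")
        case True then show ?thesis using Gtop[of a] by (simp add: D_def)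
      next
        case False then have "j \<le> n" using j by simp
        then show ?thesis using agU[OF _ a] Glow by simp
      qed
    qed
    have coefF: "fapply F (fps_const x) $ r = F r x" for x r
      by (rule fapply_const[OF sclin_addlin[OF aF]])
    have coefG: "fapply (G U) (fps_const x) $ r = G U r x" for x r
      by (rule fapply_const[OF sclin_addlin[OF aGU]])
    have DS: "D a \<in> S" if a: "a \<in> S" for a
    proof -
      have ca: "fps_const a \<in> fps_over S" by (rule fps_over_const[OF S a])
      define h where "h = fapply F (fps_const a) - fapply (G U) (fps_const a)"
      have "fapply (fexp sc U) (fps_const a) \<in> fps_over S" by (rule fexp_over[OF aU U0 S dU ca])
      then have "fapply (G U) (fps_const a) \<in> Cs" unfolding Gapp by (rule X2C)
      moreover have "fapply F (fps_const a) \<in> Cs" unfolding F_def by (rule X1C[OF ca])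
      ultimately have hC: "h \<in> Cs" unfolding h_def by (intro Cdiff)
      have hj: "h $ j = F j a - G U j a" for j by (simp add: h_def coefF coefG)
      have "h $ Suc n \<in> S" by (rule Cgap[OF hC]) (simp add: hj agU a)
      then show ?thesis by (simp add: hj D_def)
    qed
    have DL: "D (a * b) = D a * b + a * D b" if a: "a \<in> S" and b: "b \<in> S" for a b
    proof -
      have ca: "fps_const a \<in> fps_over S" by (rule fps_over_const[OF S a])
      have cb: "fps_const b \<in> fps_over S" by (rule fps_over_const[OF S b])
      have UNIVf: "f \<in> fps_over UNIV" for f :: "'b fps" by (simp add: fps_over_def)
      have Fm: "fapply F (fps_const (a * b)) = fapply F (fps_const a) * fapply F (fps_const b)"
        unfolding F_def fps_const_mult[symmetric] by (rule fexp_mult[OF a1 z1 subalg_UNIV d1 UNIVf UNIVf])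
      have Gm: "fapply (G U) (fps_const (a * b)) = fapply (G U) (fps_const a) * fapply (G U) (fps_const b)"
        unfolding Gapp fps_const_mult[symmetric] fexp_mult[OF aU U0 S dU ca cb]
        by (rule fexp_mult[OF a2 z2 subalg_UNIV d2 UNIVf UNIVf])
      have "F (Suc n) (a * b) = (\<Sum>r\<le>Suc n. F r a * F (Suc n - r) b)"
        using arg_cong[OF Fm, of "\<lambda>f. f $ Suc n"] by (simp only: coefF fps_mult_nth_atMost)
      moreover have "G U (Suc n) (a * b) = (\<Sum>r\<le>Suc n. G U r a * G U (Suc n - r) b)"
        using arg_cong[OF Gm, of "\<lambda>f. f $ Suc n"] by (simp only: coefG fps_mult_nth_atMost)
      ultimately have "D (a * b) = (\<Sum>r\<le>Suc n. F r a * F (Suc n - r) b - G U r a * G U (Suc n - r) b)"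
        by (simp add: D_def sum_subtractf)
      also have "\<dots> = (\<Sum>r\<le>Suc n. (if r = 0 then a * D b else 0) + (if r = Suc n then D a * b else 0))"
      proof (rule sum.cong[OF refl])
        fix r assume r: "r \<in> {..Suc n}"
        show "F r a * F (Suc n - r) b - G U r a * G U (Suc n - r) b = (if r = 0 then a * D b else 0) + (if r = Suc n then D a * b else 0)"
        proof (cases "r = 0")
          case True then show ?thesis by (simp add: F0 G0 D_def algebra_simps)
        next
          case False
          show ?thesis
          proof (cases "r = Suc n")
            case True then show ?thesis by (simp add: F0 G0 D_def algebra_simps)
          next
            case False
            then have "r \<le> n" "Suc n - r \<le> n" using r \<open>r \<noteq> 0\<close> by auto
            then show ?thesis using agU[OF _ a] agU[OF _ b] \<open>r \<noteq> 0\<close> False by simp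
          qed
        qed
      qed
      also have "\<dots> = D a * b + a * D b"
        by (simp add: sum.distrib)
      finally show ?thesis .
    qed
    have d': "der S (T (Suc n))"
      unfolding der_def
    proof (intro allI conjI ballI)
      fix k x assume x: "x \<in> S"
      show "T (Suc n) k x \<in> S"
      proof (cases "k = Suc n")
        case True then show ?thesis using top DS[OF x] by simp
      next
        case False then show ?thesis using U' der_in[OF dU x] by simp
      qed
    next
      fix k x y assume x: "x \<in> S" and y: "y \<in> S"
      show "T (Suc n) k (x * y) = T (Suc n) k x * y + x * T (Suc n) k y"
      proof (cases "k = Suc n")
        case True then show ?thesis using top DL[OF x y] by simp
      next
        case False then show ?thesis using U' der_leib[OF dU x y] by simp
      qed
    qed
    show ?case using z' hi' aU' d' ag' by blast
  qed
  define xi where "xi n = T n n" for n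
  have stab: "T m k = xi k" if "k \<le> m" for m k
    unfolding xi_def T_def by (rule Tseq_stable[OF that])
  have xi0: "xi 0 = (\<lambda>x. 0)" using inv[of 0] by (simp add: xi_def)
  have axi: "sclin sc xi"
    unfolding sclin_def addlin_def
  proof (intro conjI allI)
    fix n x y show "xi n (x + y) = xi n x + xi n y"
      using inv[of n] unfolding xi_def sclin_def addlin_def by blast
  next
    fix n c x show "xi n (sc c x) = sc c (xi n x)"
      using inv[of n] unfolding xi_def sclin_def by blast
  qed
  have dxi: "der S xi"
    using inv unfolding der_def xi_def by blast
  have eq: "fapply (fexp sc X1) f = fapply (fexp sc X2) (fapply (fexp sc xi) f)" if f: "f \<in> fps_over S" for f
  proof (rule fps_ext)
    fix m
    have "fapply (fexp sc X2) (fapply (fexp sc xi) f) $ m = fapply (G xi) f $ m" by (simp only: Gapp)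
    also have "\<dots> = (\<Sum>i\<le>m. G xi i (f $ (m - i)))" by (rule fapply_nth)
    also have "\<dots> = (\<Sum>i\<le>m. F i (f $ (m - i)))"
    proof (rule sum.cong[OF refl])
      fix i assume i: "i \<in> {..m}"
      have "G xi i = G (T m) i"
        unfolding G_def
      proof (rule fcomp_dep)
        fix l assume "l \<le> i"
        show "fexp sc xi l = fexp sc (T m) l"
          by (rule fexp_dep) (use stab i \<open>l \<le> i\<close> in auto)
      qed simp
      moreover have "F i (f $ (m - i)) = G (T m) i (f $ (m - i))"
        using inv[of m] i fps_overD[OF f] by auto
      ultimately show "G xi i (f $ (m - i)) = F i (f $ (m - i))" by simp
    qed
    also have "\<dots> = fapply (fexp sc X1) f $ m" by (simp only: fapply_nth F_def)
    finally show "fapply (fexp sc X1) f $ m = fapply (fexp sc X2) (fapply (fexp sc xi) f) $ m" by simp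
  qed
  show ?thesis using xi0 axi dxi eq by blast
qed

end



lemma derivation_UNIV_sclin:
  assumes "\<And>n. derivation_on sc UNIV (X n)"
  shows "sclin sc X" "der UNIV X"
  using assms unfolding derivation_on_def klinear_on_def sclin_def addlin_def der_def by auto

lemma sclin_der_derivation:
  assumes "sclin sc X" "der S X"
  shows "derivation_on sc S (X n)"
  using assms unfolding derivation_on_def klinear_on_def sclin_def addlin_def der_def by auto

lemma der_fneg:
  assumes S: "subalg sc S" and d: "der S X"
  shows "der S (fneg X)"
  unfolding der_def fneg_def
proof (intro allI conjI ballI)
  fix n x assume "x \<in> S"
  then show "- X n x \<in> S" using subalg_neg[OF S der_in[OF d]] by blast
next
  fix n x y assume "x \<in> S" "y \<in> S"
  then show "- X n (x * y) = - X n x * y + x * - X n y"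
    using der_leib[OF d] by (simp add: algebra_simps)
qed

lemma fneg_fneg: "fneg (fneg X) = X" for X :: "nat \<Rightarrow> 'a \<Rightarrow> 'b::group_add"
  by (simp add: fneg_def fun_eq_iff)

lemma fbracket_nth: "fbracket P f g $ n = (\<Sum>i\<le>n. \<Sum>j\<le>n - i. P i (f $ j) (g $ (n - i - j)))"
  by (simp add: fbracket_def)

lemma fbracket_diff:
  assumes "\<And>i x. addlin (\<lambda>_. P i x)"
  shows "fbracket P f (g - h) = fbracket P f g - fbracket P f h"
proof (rule fps_ext)
  fix n
  have "\<And>i x a b. P i x (a - b) = P i x a - P i x b"
    using addlin_diff[OF assms] by blast
  then show "fbracket P f (g - h) $ n = (fbracket P f g - fbracket P f h) $ n"
    by (simp only: fbracket_nth fps_sub_nth sum_subtractf)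
qed

lemma fbracket_over:
  assumes S: "subalg sc S" and P: "\<And>i x y. x \<in> S \<Longrightarrow> y \<in> S \<Longrightarrow> P i x y \<in> S"
    and f: "f \<in> fps_over S" and g: "g \<in> fps_over S"
  shows "fbracket P f g \<in> fps_over S"
proof (rule fps_overI)
  fix n show "fbracket P f g $ n \<in> S"
    unfolding fbracket_nth
    by (rule subalg_sum[OF S], rule subalg_sum[OF S], rule P) (rule fps_overD[OF f], rule fps_overD[OF g])
qed

lemma fapply_const_gen:
  assumes "\<And>i. F i 0 = 0"
  shows "fapply F (fps_const a) $ n = F n a"
proof -
  have "fapply F (fps_const a) $ n = (\<Sum>i\<le>n. if i = n then F n a else 0)"
    unfolding fapply_nth by (rule sum.cong) (auto simp: assms)
  then show ?thesis by simp
qed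

lemma fbracket_gap:
  assumes P: "\<And>i x. addlin (\<lambda>_. P i x)" and h: "\<And>j. j < m \<Longrightarrow> h $ j = 0"
  shows "fbracket P f h $ m = P 0 (f $ 0) (h $ m)"
proof -
  have z: "P i x 0 = 0" for i x using addlin_zero[OF P] by blast
  have "fbracket P f h $ m = (\<Sum>i\<le>m. \<Sum>j\<le>m - i. if i = 0 \<and> j = 0 then P 0 (f $ 0) (h $ m) else 0)"
    unfolding fbracket_nth
  proof (intro sum.cong refl)
    fix i j assume "i \<in> {..m}" "j \<in> {..m - i}"
    show "P i (f $ j) (h $ (m - i - j)) = (if i = 0 \<and> j = 0 then P 0 (f $ 0) (h $ m) else 0)"
    proof (cases "i = 0 \<and> j = 0")
      case True then show ?thesis by simp
    next
      case False
      then have "m - i - j < m" using \<open>i \<in> {..m}\<close> \<open>j \<in> {..m - i}\<close> by auto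
      then have "h $ (m - i - j) = 0" using h by simp
      then show ?thesis using z by (simp only: if_not_P[OF False])
    qed
  qed
  also have "\<dots> = (\<Sum>i\<le>m. if i = 0 then P 0 (f $ 0) (h $ m) else 0)"
  proof (rule sum.cong[OF refl])
    fix i assume "i \<in> {..m}"
    show "(\<Sum>j\<le>m - i. if i = 0 \<and> j = 0 then P 0 (f $ 0) (h $ m) else 0) = (if i = 0 then P 0 (f $ 0) (h $ m) else 0)"
      by (cases "i = 0") simp_all
  qed
  also have "\<dots> = P 0 (f $ 0) (h $ m)"
    by simp
  finally show ?thesis .
qed

theorem proposition3p10:
  fixes scA :: "'k::field_char_0 \<Rightarrow> 'a::comm_ring_1 \<Rightarrow> 'a"
    and scB :: "'k \<Rightarrow> 'b::comm_ring_1 \<Rightarrow> 'b"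
    and pi0 :: "'a \<Rightarrow> 'a \<Rightarrow> 'a" and sigma0 :: "'b \<Rightarrow> 'b \<Rightarrow> 'b"
    and phi0 :: "'a \<Rightarrow> 'b"
    and pi :: "nat \<Rightarrow> 'a \<Rightarrow> 'a \<Rightarrow> 'a" and sigma :: "nat \<Rightarrow> 'b \<Rightarrow> 'b \<Rightarrow> 'b"
    and Phi :: "nat \<Rightarrow> 'a \<Rightarrow> 'b"
    and X1 X2 :: "nat \<Rightarrow> 'b \<Rightarrow> 'b"
  defines "A' \<equiv> poisson_commutant sigma0 phi0"
    and "C \<equiv> {g. \<forall>f. fbracket sigma (fapply Phi f) g = 0}"
  assumes algA: "kalgebra scA" and algB: "kalgebra scB"
    and pA: "poisson_on scA UNIV pi0" and pB: "poisson_on scB UNIV sigma0"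
    and phi0_lin: "klinear_on scA scB UNIV phi0"
    and phi0_one: "phi0 1 = 1"
    and phi0_mult: "\<And>x y. phi0 (x * y) = phi0 x * phi0 y"
    and phi0_poisson: "\<And>x y. phi0 (pi0 x y) = sigma0 (phi0 x) (phi0 y)"
    and pi_def: "formal_poisson_on scA UNIV pi" and pi_0: "pi 0 = pi0"
    and sigma_def: "formal_poisson_on scB UNIV sigma" and sigma_0: "sigma 0 = sigma0"
    and Phi_lin: "\<And>n. klinear_on scA scB UNIV (Phi n)"
    and Phi_0: "Phi 0 = phi0"
    and Phi_one: "fapply Phi 1 = 1"
    and Phi_mult: "\<And>f g. fapply Phi (f * g) = fapply Phi f * fapply Phi g"
    and Phi_poisson: "\<And>f g. fapply Phi (fbracket pi f g) = fbracket sigma (fapply Phi f) (fapply Phi g)"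
    and X1_0: "X1 0 = (\<lambda>x. 0)" and X1_der: "\<And>n. derivation_on scB UNIV (X1 n)"
    and X2_0: "X2 0 = (\<lambda>x. 0)" and X2_der: "\<And>n. derivation_on scB UNIV (X2 n)"
    and X1_C: "fapply (fexp scB X1) ` fps_over A' \<subseteq> C"
    and X2_C: "fapply (fexp scB X2) ` fps_over A' \<subseteq> C"
  shows "(\<exists>xi. xi 0 = (\<lambda>x. 0) \<and> (\<forall>n. derivation_on scB A' (xi n)) \<and>
            (\<forall>f\<in>fps_over A'. fapply (fexp scB X1) f = fapply (fexp scB X2) (fapply (fexp scB xi) f)))
       \<and> (\<forall>P1 P2.
            formal_poisson_on scB A' P1 \<and>
            (\<forall>f\<in>fps_over A'. \<forall>g\<in>fps_over A'.
               fapply (fexp scB X1) (fbracket P1 f g) = fbracket sigma (fapply (fexp scB X1) f) (fapply (fexp scB X1) g)) \<and>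
            formal_poisson_on scB A' P2 \<and>
            (\<forall>f\<in>fps_over A'. \<forall>g\<in>fps_over A'.
               fapply (fexp scB X2) (fbracket P2 f g) = fbracket sigma (fapply (fexp scB X2) f) (fapply (fexp scB X2) g))
          \<longrightarrow> (\<exists>eta. eta 0 = (\<lambda>x. 0) \<and> (\<forall>n. derivation_on scB A' (eta n)) \<and>
                (\<forall>f\<in>fps_over A'. \<forall>g\<in>fps_over A'.
                   fbracket P2 f g = fapply (fexp scB eta)
                      (fbracket P1 (fapply (fexp scB (fneg eta)) f) (fapply (fexp scB (fneg eta)) g)))))"

proof -
  interpret kalg scB by (rule kalg.intro[OF algB])
  have a1: "sclin scB X1" and d1: "der UNIV X1" using derivation_UNIV_sclin[OF X1_der] by auto
  have a2: "sclin scB X2" and d2: "der UNIV X2" using derivation_UNIV_sclin[OF X2_der] by auto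
  have s0lin: "klinear_on scB scB UNIV (sigma0 x)" for x
    using pB unfolding poisson_on_def kbilinear_on_def by blast
  have s0add: "sigma0 x (y + z) = sigma0 x y + sigma0 x z" for x y z
    using s0lin[of x] unfolding klinear_on_def by blast
  have s0sc: "sigma0 x (scB c y) = scB c (sigma0 x y)" for x c y
    using s0lin[of x] unfolding klinear_on_def by blast
  have s0leib: "sigma0 x (y * z) = sigma0 x y * z + y * sigma0 x z" for x y z
    using pB unfolding poisson_on_def by blast
  have s0addlin: "addlin (\<lambda>_. sigma0 x)" for x unfolding addlin_def using s0add by blast
  have SA: "subalg scB A'"
    unfolding subalg_def A'_def poisson_commutant_def
    using addlin_zero[OF s0addlin] addlin_neg[OF s0addlin] s0add s0sc s0leib
    by (simp add: vs.scale_zero_right)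
  have slin: "klinear_on scB scB UNIV (sigma i x)" for i x
    using sigma_def unfolding formal_poisson_on_def kbilinear_on_def by blast
  have saddlin: "addlin (\<lambda>_. sigma i x)" for i x
    using slin[of i x] unfolding klinear_on_def addlin_def by blast
  have Cdiff: "g - h \<in> C" if "g \<in> C" "h \<in> C" for g h
    using that unfolding C_def by (simp add: fbracket_diff[OF saddlin])
  have Phi0: "Phi i 0 = 0" for i
  proof -
    have "Phi i (0 + 0) = Phi i 0 + Phi i 0" using Phi_lin[of i] unfolding klinear_on_def by blast
    then show ?thesis by simp
  qed
  have Cgap: "h $ m \<in> A'" if hC: "h \<in> C" and h0: "\<And>j. j < m \<Longrightarrow> h $ j = 0" for h m
  proof -
    have "sigma0 (phi0 a) (h $ m) = 0" for a
    proof -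
      have "fbracket sigma (fapply Phi (fps_const a)) h = 0" using hC unfolding C_def by blast
      then have "fbracket sigma (fapply Phi (fps_const a)) h $ m = 0" by simp
      then show ?thesis
        using fbracket_gap[OF saddlin h0, where f = "fapply Phi (fps_const a)"] fapply_const_gen[of Phi, OF Phi0, of a 0]
          sigma_0 Phi_0 by simp
    qed
    then show ?thesis unfolding A'_def poisson_commutant_def by blast
  qed
  have X1C: "fapply (fexp scB X1) f \<in> C" if "f \<in> fps_over A'" for f using X1_C that by blast
  have X2C: "fapply (fexp scB X2) f \<in> C" if "f \<in> fps_over A'" for f using X2_C that by blast
  obtain xi where xi0: "xi 0 = (\<lambda>x. 0)" and axi: "sclin scB xi" and dxi: "der A' xi"
    and eq: "\<And>f. f \<in> fps_over A' \<Longrightarrow> fapply (fexp scB X1) f = fapply (fexp scB X2) (fapply (fexp scB xi) f)"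
    using construct_xi[OF SA a1 X1_0 d1 a2 X2_0 d2 Cdiff Cgap X1C X2C] by blast
  have derxi: "derivation_on scB A' (xi n)" for n by (rule sclin_der_derivation[OF axi dxi])
  have partI: "\<exists>xi. xi 0 = (\<lambda>x. 0) \<and> (\<forall>n. derivation_on scB A' (xi n)) \<and>
            (\<forall>f\<in>fps_over A'. fapply (fexp scB X1) f = fapply (fexp scB X2) (fapply (fexp scB xi) f))"
    using xi0 derxi eq by blast
  have inj2: "u = v" if "fapply (fexp scB X2) u = fapply (fexp scB X2) v" for u v
  proof -
    have an2: "sclin scB (fneg X2)" by (rule sclin_fneg[OF a2])
    have zn2: "fneg X2 0 = (\<lambda>x. 0)" using X2_0 by (rule sclin_fneg_z)
    have "fapply (fexp scB (fneg X2)) (fapply (fexp scB (fneg (fneg X2))) w) = w" for w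
      by (rule fexp_inv[OF an2 zn2])
    then have "fapply (fexp scB (fneg X2)) (fapply (fexp scB X2) w) = w" for w
      by (simp only: fneg_fneg)
    then show ?thesis using that by metis
  qed
  have xiover: "fapply (fexp scB xi) f \<in> fps_over A'" if "f \<in> fps_over A'" for f
    by (rule fexp_over[OF axi xi0 SA dxi that])
  have anxi: "sclin scB (fneg xi)" by (rule sclin_fneg[OF axi])
  have znxi: "fneg xi 0 = (\<lambda>x. 0)" using xi0 by (rule sclin_fneg_z)
  have nxiover: "fapply (fexp scB (fneg xi)) f \<in> fps_over A'" if "f \<in> fps_over A'" for f
    by (rule fexp_over[OF anxi znxi SA der_fneg[OF SA dxi] that])
  have xiinv: "fapply (fexp scB xi) (fapply (fexp scB (fneg xi)) f) = f" for f
    by (rule fexp_inv[OF axi xi0])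
  have partII: "\<exists>eta. eta 0 = (\<lambda>x. 0) \<and> (\<forall>n. derivation_on scB A' (eta n)) \<and>
                (\<forall>f\<in>fps_over A'. \<forall>g\<in>fps_over A'.
                   fbracket P2 f g = fapply (fexp scB eta)
                      (fbracket P1 (fapply (fexp scB (fneg eta)) f) (fapply (fexp scB (fneg eta)) g)))"
    if P1: "formal_poisson_on scB A' P1"
      and H1: "\<forall>f\<in>fps_over A'. \<forall>g\<in>fps_over A'.
               fapply (fexp scB X1) (fbracket P1 f g) = fbracket sigma (fapply (fexp scB X1) f) (fapply (fexp scB X1) g)"
      and P2: "formal_poisson_on scB A' P2"
      and H2: "\<forall>f\<in>fps_over A'. \<forall>g\<in>fps_over A'.
               fapply (fexp scB X2) (fbracket P2 f g) = fbracket sigma (fapply (fexp scB X2) f) (fapply (fexp scB X2) g)"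
    for P1 P2
  proof -
    have P1in: "P1 i x y \<in> A'" if "x \<in> A'" "y \<in> A'" for i x y
      using P1 that unfolding formal_poisson_on_def by blast
    have key: "fapply (fexp scB xi) (fbracket P1 u v) = fbracket P2 (fapply (fexp scB xi) u) (fapply (fexp scB xi) v)"
      if u: "u \<in> fps_over A'" and v: "v \<in> fps_over A'" for u v
    proof (rule inj2)
      have b1: "fbracket P1 u v \<in> fps_over A'" by (rule fbracket_over[OF SA P1in u v])
      have "fapply (fexp scB X2) (fapply (fexp scB xi) (fbracket P1 u v)) = fapply (fexp scB X1) (fbracket P1 u v)"
        by (rule eq[OF b1, symmetric])
      also have "\<dots> = fbracket sigma (fapply (fexp scB X1) u) (fapply (fexp scB X1) v)"
        using H1 u v by blast
      also have "\<dots> = fbracket sigma (fapply (fexp scB X2) (fapply (fexp scB xi) u)) (fapply (fexp scB X2) (fapply (fexp scB xi) v))"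
        by (simp only: eq[OF u] eq[OF v])
      also have "\<dots> = fapply (fexp scB X2) (fbracket P2 (fapply (fexp scB xi) u) (fapply (fexp scB xi) v))"
        using H2 xiover[OF u] xiover[OF v] by metis
      finally show "fapply (fexp scB X2) (fapply (fexp scB xi) (fbracket P1 u v)) = fapply (fexp scB X2) (fbracket P2 (fapply (fexp scB xi) u) (fapply (fexp scB xi) v))" .
    qed
    have "fbracket P2 f g = fapply (fexp scB xi) (fbracket P1 (fapply (fexp scB (fneg xi)) f) (fapply (fexp scB (fneg xi)) g))"
      if f: "f \<in> fps_over A'" and g: "g \<in> fps_over A'" for f g
      using key[OF nxiover[OF f] nxiover[OF g]] by (simp only: xiinv)
    then show ?thesis using xi0 derxi by blast
  qed
  show ?thesis using partI partII by blast
qed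



end
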